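(* Let $d\ge3$, $0<z<1$, $0<\alpha<1/2$, and for $\beta>0$ set $y=y(\beta)=-\log(z)/\beta$. Let $r_1,\dots,r_d$ be independent with distribution $\alpha\delta_{-1}+(1-2\alpha)\delta_0+\alpha\delta_1$, let $\rho_i(\sigma)=\frac{1+\sigma r_i}{2}$ for $\sigma=\pm1$, and \[X_1=\sum_{\tau\in\{\pm1\}}\prod_{h=1}^d\left(1-(1-e^{-\beta})\rho_h(\tau)\right),\qquad X_2=1-(1-e^{-\beta})\sum_{\tau\in\{\pm1\}}\rho_1(\tau)\rho_2(\tau).\] Then \[\lim_{\beta\to\infty}\frac{1}{\beta y}\left(\log\mathbb{E}[X_1^y]-\frac d2\log\mathbb{E}[X_2^y]\right)=F_d(\alpha,z),\] where $F_d(\alpha,z)=-\frac{\log(\zeta\mathcal{A}^d\xi)}{\log z}+\frac{d\log(1-2\alpha^2+2\alpha^2z)}{2\log z}$, $\mathcal{A}=(1-2\alpha)I+2\alpha\sqrt z\,\mathcal{M}$, $I$ is the $(d+1)\times(d+1)$ identity, $\zeta=(1,0,\dots,0)\in\mathbb{R}^{1\times(d+1)}$, $\xi=(1,z^{-1/2},z^{-1},\dots,z^{-d/2})^T$, and $\mathcal{M}$ is the $(d+1)\times(d+1)$ matrix indexed by $0,\dots,d$ with $\mathcal{M}_{0,1}=\mathcal{M}_{d,d-1}=1$, $\mathcal{M}_{i,i-1}=\mathcal{M}_{i,i+1}=1/2$ for $1\le i\le d-1$, and all other entries $0$.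
   Context: $\delta_x$ denotes the point mass at $x$. *)

theory Defs
  imports "HOL-Probability.Probability" "Jordan_Normal_Form.Matrix"
begin

definition rdist :: "real \<Rightarrow> real pmf" where
  "rdist \<alpha> = embed_pmf (\<lambda>x. if x = -1 then \<alpha> else if x = 0 then 1 - 2*\<alpha>
                               else if x = 1 then \<alpha> else 0)"

definition rjoint :: "nat \<Rightarrow> real \<Rightarrow> (nat \<Rightarrow> real) pmf" where
  "rjoint d \<alpha> = Pi_pmf {1..d} 0 (\<lambda>_. rdist \<alpha>)"

definition rho :: "(nat \<Rightarrow> real) \<Rightarrow> nat \<Rightarrow> real \<Rightarrow> real" where
  "rho r i \<sigma> = (1 + \<sigma> * r i) / 2"

definition X1 :: "nat \<Rightarrow> real \<Rightarrow> (nat \<Rightarrow> real) \<Rightarrow> real" where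
  "X1 d \<beta> r = (\<Sum>\<tau>\<in>{-1, 1::real}. \<Prod>h=1..d. 1 - (1 - exp (-\<beta>)) * rho r h \<tau>)"

definition X2 :: "real \<Rightarrow> (nat \<Rightarrow> real) \<Rightarrow> real" where
  "X2 \<beta> r = 1 - (1 - exp (-\<beta>)) * (\<Sum>\<tau>\<in>{-1, 1::real}. rho r 1 \<tau> * rho r 2 \<tau>)"

definition Mmat :: "nat \<Rightarrow> real mat" where
  "Mmat d = mat (d+1) (d+1) (\<lambda>(i, j).
     if i = 0 then (if j = 1 then 1 else 0)
     else if i = d then (if j = d - 1 then 1 else 0)
     else if j = i - 1 \<or> j = i + 1 then 1/2 else 0)"

definition Amat :: "nat \<Rightarrow> real \<Rightarrow> real \<Rightarrow> real mat" where
  "Amat d \<alpha> z = (1 - 2*\<alpha>) \<cdot>\<^sub>m 1\<^sub>m (d+1) + (2 * \<alpha> * sqrt z) \<cdot>\<^sub>m Mmat d"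

definition xi :: "nat \<Rightarrow> real \<Rightarrow> real vec" where
  "xi d z = vec (d+1) (\<lambda>k. z powr (- real k / 2))"

definition zeta :: "nat \<Rightarrow> real vec" where
  "zeta d = unit_vec (d+1) 0"

definition Fd :: "nat \<Rightarrow> real \<Rightarrow> real \<Rightarrow> real" where
  "Fd d \<alpha> z = - ln (zeta d \<bullet> ((Amat d \<alpha> z ^\<^sub>m d) *\<^sub>v xi d z)) / ln z
      + real d * ln (1 - 2*\<alpha>^2 + 2*\<alpha>^2*z) / (2 * ln z)"

end

theory Submission
  imports Defs "HOL-Real_Asymp.Real_Asymp"
begin

lemma sum3: "(\<Sum>x\<in>{-1,0,1::real}. (g x :: 'a :: comm_monoid_add)) = g (-1) + g 0 + g 1"
  by (simp add: add.assoc)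

lemma nn3: "0 \<le> a \<Longrightarrow> 0 \<le> b \<Longrightarrow> 0 \<le> c \<Longrightarrow> (\<integral>\<^sup>+ x. ennreal (if x = -1 then a else if x = 0 then b else if x = 1 then c else 0) \<partial>count_space (UNIV::real set)) = ennreal (a + b + c)"
  apply (subst nn_integral_count_space'[where A="{-1,0,1::real}"])
  apply simp apply simp apply simp
  apply (subst sum.insert) apply simp apply simp
  apply (subst sum.insert) apply simp apply simp
  apply (simp add: ennreal_plus[symmetric] del: ennreal_plus)
  done

lemma rdist_pmf:
  assumes "0 < \<alpha>" "\<alpha> < 1/2"
  shows "pmf (rdist \<alpha>) x = (if x = -1 then \<alpha> else if x = 0 then 1 - 2*\<alpha> else if x = 1 then \<alpha> else 0)"
  unfolding rdist_def
  by (rule pmf_embed_pmf) (use assms in \<open>auto simp: nn3\<close>)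

lemma rdist_set:
  assumes "0 < \<alpha>" "\<alpha> < 1/2"
  shows "set_pmf (rdist \<alpha>) \<subseteq> {-1,0,1}"
  using rdist_pmf[OF assms] by (auto simp: set_pmf_iff split: if_splits)

lemma rdist_exp:
  assumes "0 < \<alpha>" "\<alpha> < 1/2"
  shows "measure_pmf.expectation (rdist \<alpha>) g = \<alpha> * g (-1) + (1 - 2*\<alpha>) * g 0 + \<alpha> * g 1"
  apply (subst integral_measure_pmf_real[where A="{-1,0,1}"])
  using rdist_set[OF assms] rdist_pmf[OF assms] by (auto simp: algebra_simps)

lemma rjoint_set:
  assumes "0 < \<alpha>" "\<alpha> < 1/2"
  shows "set_pmf (rjoint n \<alpha>) \<subseteq> PiE_dflt {1..n} 0 (\<lambda>_. {-1,0,1})"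
  unfolding rjoint_def
  apply (rule order.trans[OF set_Pi_pmf_subset'])
  using rdist_set[OF assms] by (auto simp: PiE_dflt_def)

lemma rjoint_vals:
  assumes "0 < \<alpha>" "\<alpha> < 1/2" "r \<in> set_pmf (rjoint n \<alpha>)"
  shows "r h \<in> {-1,0,1}"
  using rjoint_set[OF assms(1,2)] assms(3) by (auto simp: PiE_dflt_def)

lemma rjoint_finite:
  assumes "0 < \<alpha>" "\<alpha> < 1/2"
  shows "finite (set_pmf (rjoint n \<alpha>))"
  by (rule finite_subset[OF rjoint_set[OF assms]]) auto

lemma rjoint_step:
  assumes "0 < \<alpha>" "\<alpha> < 1/2"
  shows "measure_pmf.expectation (rjoint (Suc n) \<alpha>) \<phi> =
     \<alpha> * measure_pmf.expectation (rjoint n \<alpha>) (\<lambda>r. \<phi> (r(Suc n := -1)))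
   + (1 - 2*\<alpha>) * measure_pmf.expectation (rjoint n \<alpha>) (\<lambda>r. \<phi> (r(Suc n := 0)))
   + \<alpha> * measure_pmf.expectation (rjoint n \<alpha>) (\<lambda>r. \<phi> (r(Suc n := 1)))"
proof -
  have e: "{1..Suc n} = insert (Suc n) {1..n}" by auto
  have "rjoint (Suc n) \<alpha> = rdist \<alpha> \<bind> (\<lambda>y. map_pmf (\<lambda>f. f(Suc n := y)) (rjoint n \<alpha>))"
    unfolding rjoint_def e by (subst Pi_pmf_insert') (auto simp: map_pmf_def)
  hence "measure_pmf.expectation (rjoint (Suc n) \<alpha>) \<phi> =
     measure_pmf.expectation (rdist \<alpha> \<bind> (\<lambda>y. map_pmf (\<lambda>f. f(Suc n := y)) (rjoint n \<alpha>))) \<phi>"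
    by simp
  also have "\<dots> = (\<Sum>a\<in>{-1,0,1}. pmf (rdist \<alpha>) a *\<^sub>R measure_pmf.expectation (map_pmf (\<lambda>f. f(Suc n := a)) (rjoint n \<alpha>)) \<phi>)"
    by (rule pmf_expectation_bind) (use rdist_set[OF assms] rjoint_finite[OF assms] in auto)
  finally show ?thesis using rdist_pmf[OF assms] by (simp add: algebra_simps)
qed

definition Dn :: "nat \<Rightarrow> (nat \<Rightarrow> real) \<Rightarrow> real" where
  "Dn n r = (\<Sum>h=1..n. r h)"
definition Nn :: "nat \<Rightarrow> (nat \<Rightarrow> real) \<Rightarrow> real" where
  "Nn n r = (\<Sum>h=1..n. \<bar>r h\<bar>)"
definition ff :: "real \<Rightarrow> real \<Rightarrow> nat \<Rightarrow> real \<Rightarrow> real" where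
  "ff \<alpha> z n j = measure_pmf.expectation (rjoint n \<alpha>) (\<lambda>r. z powr ((Nn n r - \<bar>j + Dn n r\<bar>) / 2))"

lemma Dn_upd: "Dn (Suc n) (r(Suc n := y)) = Dn n r + y"
proof -
  have "(\<Sum>h=1..n. (r(Suc n := y)) h) = (\<Sum>h=1..n. r h)" by (rule sum.cong) auto
  thus ?thesis unfolding Dn_def by simp
qed

lemma Nn_upd: "Nn (Suc n) (r(Suc n := y)) = Nn n r + \<bar>y\<bar>"
proof -
  have "(\<Sum>h=1..n. \<bar>(r(Suc n := y)) h\<bar>) = (\<Sum>h=1..n. \<bar>r h\<bar>)" by (rule sum.cong) auto
  thus ?thesis unfolding Nn_def by simp
qed

lemma ff_0: "ff \<alpha> z 0 j = z powr (- \<bar>j\<bar> / 2)"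
  unfolding ff_def rjoint_def Dn_def Nn_def by simp

lemma ff_Suc:
  assumes "0 < \<alpha>" "\<alpha> < 1/2" "0 < z"
  shows "ff \<alpha> z (Suc n) j = \<alpha> * sqrt z * ff \<alpha> z n (j - 1) + (1 - 2*\<alpha>) * ff \<alpha> z n j + \<alpha> * sqrt z * ff \<alpha> z n (j + 1)"
proof -
  have s: "sqrt z = z powr (1/2)" using assms by (simp add: powr_half_sqrt)
  have e1: "(\<lambda>r. z powr ((Nn (Suc n) (r(Suc n := -1)) - \<bar>j + Dn (Suc n) (r(Suc n := -1))\<bar>) / 2))
      = (\<lambda>r. sqrt z * z powr ((Nn n r - \<bar>(j - 1) + Dn n r\<bar>) / 2))"
    unfolding s Dn_upd Nn_upd by (rule ext, subst powr_add[symmetric], rule arg_cong[where f="(powr) z"], simp add: field_simps)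
  have e2: "(\<lambda>r. z powr ((Nn (Suc n) (r(Suc n := 1)) - \<bar>j + Dn (Suc n) (r(Suc n := 1))\<bar>) / 2))
      = (\<lambda>r. sqrt z * z powr ((Nn n r - \<bar>(j + 1) + Dn n r\<bar>) / 2))"
    unfolding s Dn_upd Nn_upd by (rule ext, subst powr_add[symmetric], rule arg_cong[where f="(powr) z"], simp add: field_simps)
  have e0: "(\<lambda>r. z powr ((Nn (Suc n) (r(Suc n := 0)) - \<bar>j + Dn (Suc n) (r(Suc n := 0))\<bar>) / 2))
      = (\<lambda>r. z powr ((Nn n r - \<bar>j + Dn n r\<bar>) / 2))"
    unfolding Dn_upd Nn_upd by simp
  show ?thesis
    unfolding ff_def
    by (subst rjoint_step[OF assms(1,2)], unfold e0 e1 e2 integral_mult_right_zero) (simp add: algebra_simps)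
qed

lemma ff_sym:
  assumes "0 < \<alpha>" "\<alpha> < 1/2" "0 < z"
  shows "ff \<alpha> z n (- j) = ff \<alpha> z n j"
proof (induction n arbitrary: j)
  case 0
  then show ?case by (simp add: ff_0)
next
  case (Suc n)
  have a: "ff \<alpha> z n (- j - 1) = ff \<alpha> z n (j + 1)" using Suc.IH[of "j+1"] by simp
  have b: "ff \<alpha> z n (- j + 1) = ff \<alpha> z n (j - 1)" using Suc.IH[of "j-1"] by simp
  show ?case unfolding ff_Suc[OF assms] a b Suc.IH by (simp add: algebra_simps)
qed


lemma Amat_carrier: "Amat d \<alpha> z \<in> carrier_mat (d+1) (d+1)"
  unfolding Amat_def Mmat_def by auto

lemma pow_mat_Suc': "A \<in> carrier_mat n n \<Longrightarrow> A ^\<^sub>m Suc k = A * A ^\<^sub>m k"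
proof (induction k)
  case 0
  then show ?case by simp
next
  case (Suc k)
  have "A ^\<^sub>m Suc (Suc k) = (A * A ^\<^sub>m k) * A" using Suc by simp
  also have "\<dots> = A * (A ^\<^sub>m k * A)" using Suc.prems by (intro assoc_mult_mat) auto
  finally show ?case by simp
qed

lemma A0:
  assumes "k < d+1" "1 \<le> d"
  shows "Amat d \<alpha> z $$ (0,k) = (if k = 0 then 1-2*\<alpha> else 0) + (if k = 1 then 2*\<alpha>* sqrt z else 0)"
  using assms unfolding Amat_def Mmat_def by auto

lemma Aj:
  assumes "0 < j" "j < d" "k < d+1"
  shows "Amat d \<alpha> z $$ (j,k) = (if k = j then 1-2*\<alpha> else 0) + (if k = j - 1 then \<alpha>* sqrt z else 0) + (if k = j + 1 then \<alpha>* sqrt z else 0)"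
  using assms unfolding Amat_def Mmat_def by auto

lemma Av0:
  assumes "w \<in> carrier_vec (d+1)" "1 \<le> d"
  shows "(Amat d \<alpha> z *\<^sub>v w) $ 0 = (1-2*\<alpha>) * w $ 0 + 2*\<alpha>* sqrt z * w $ 1"
proof -
  have "(Amat d \<alpha> z *\<^sub>v w) $ 0 = (\<Sum>k\<in>{0..<d+1}. Amat d \<alpha> z $$ (0,k) * w $ k)"
    using assms Amat_carrier[of d \<alpha> z] by (simp add: scalar_prod_def)
  also have "\<dots> = (\<Sum>k\<in>{0..<d+1}. (if k = 0 then (1-2*\<alpha>) * w $ k else 0) + (if k = 1 then 2*\<alpha>* sqrt z * w $ k else 0))"
    by (rule sum.cong) (use assms in \<open>auto simp: A0\<close>)
  also have "\<dots> = (1-2*\<alpha>) * w $ 0 + 2*\<alpha>* sqrt z * w $ 1"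
    using assms by (simp add: sum.distrib)
  finally show ?thesis .
qed

lemma Avj:
  assumes "w \<in> carrier_vec (d+1)" "0 < j" "j < d"
  shows "(Amat d \<alpha> z *\<^sub>v w) $ j = (1-2*\<alpha>) * w $ j + \<alpha>* sqrt z * w $ (j-1) + \<alpha>* sqrt z * w $ (j+1)"
proof -
  have "(Amat d \<alpha> z *\<^sub>v w) $ j = (\<Sum>k\<in>{0..<d+1}. Amat d \<alpha> z $$ (j,k) * w $ k)"
    using assms Amat_carrier[of d \<alpha> z] by (simp add: scalar_prod_def)
  also have "\<dots> = (\<Sum>k\<in>{0..<d+1}. (if k = j then (1-2*\<alpha>) * w $ k else 0) + (if k = j - 1 then \<alpha>* sqrt z * w $ k else 0)
      + (if k = j + 1 then \<alpha>* sqrt z * w $ k else 0))"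
    by (rule sum.cong) (use assms in \<open>auto simp: Aj\<close>)
  also have "\<dots> = (1-2*\<alpha>) * w $ j + \<alpha>* sqrt z * w $ (j-1) + \<alpha>* sqrt z * w $ (j+1)"
    using assms by (auto simp add: sum.distrib)
  finally show ?thesis .
qed

lemma xi_carrier: "xi d z \<in> carrier_vec (d+1)"
  unfolding xi_def by simp

lemma Apow_xi:
  assumes "0 < \<alpha>" "\<alpha> < 1/2" "0 < z" "1 \<le> d"
  shows "j + n \<le> d \<Longrightarrow> (Amat d \<alpha> z ^\<^sub>m n *\<^sub>v xi d z) $ j = ff \<alpha> z n (real j)"
proof (induction n arbitrary: j)
  case 0
  then show ?case using Amat_carrier[of d \<alpha> z]
    by (simp add: xi_def ff_0)
next
  case (Suc n)
  let ?A = "Amat d \<alpha> z"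
  let ?w = "?A ^\<^sub>m n *\<^sub>v xi d z"
  have wc: "?w \<in> carrier_vec (d+1)"
    by (rule mult_mat_vec_carrier[OF pow_carrier_mat[OF Amat_carrier] xi_carrier])
  have "?A ^\<^sub>m Suc n *\<^sub>v xi d z = ?A *\<^sub>v ?w"
    unfolding pow_mat_Suc'[OF Amat_carrier]
    by (rule assoc_mult_mat_vec[OF Amat_carrier pow_carrier_mat[OF Amat_carrier] xi_carrier])
  moreover have "(?A *\<^sub>v ?w) $ j = ff \<alpha> z (Suc n) (real j)"
  proof (cases "j = 0")
    case True
    have "(?A *\<^sub>v ?w) $ j = (1-2*\<alpha>) * ff \<alpha> z n 0 + 2*\<alpha>* sqrt z * ff \<alpha> z n 1"
      using True Av0[OF wc assms(4)] Suc.IH[of 0] Suc.IH[of 1] Suc.prems by simp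
    also have "\<dots> = ff \<alpha> z (Suc n) (real j)"
      unfolding ff_Suc[OF assms(1-3)] True using ff_sym[OF assms(1-3), of n 1] by (simp add: algebra_simps)
    finally show ?thesis .
  next
    case False
    have "(?A *\<^sub>v ?w) $ j = (1-2*\<alpha>) * ff \<alpha> z n j + \<alpha>* sqrt z * ff \<alpha> z n (real (j-1)) + \<alpha>* sqrt z * ff \<alpha> z n (real (j+1))"
      using False Avj[OF wc, of j] Suc.IH[of j] Suc.IH[of "j-1"] Suc.IH[of "j+1"] Suc.prems by simp
    also have "\<dots> = ff \<alpha> z (Suc n) (real j)"
      unfolding ff_Suc[OF assms(1-3)] using False by (simp add: algebra_simps of_nat_diff)
    finally show ?thesis .
  qed
  ultimately show ?case by simp
qed

lemma zeta_val:
  assumes "0 < \<alpha>" "\<alpha> < 1/2" "0 < z" "1 \<le> d"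
  shows "zeta d \<bullet> ((Amat d \<alpha> z ^\<^sub>m d) *\<^sub>v xi d z) = ff \<alpha> z d 0"
proof -
  have wc: "(Amat d \<alpha> z ^\<^sub>m d) *\<^sub>v xi d z \<in> carrier_vec (d+1)"
    by (rule mult_mat_vec_carrier[OF pow_carrier_mat[OF Amat_carrier] xi_carrier])
  have "zeta d \<bullet> ((Amat d \<alpha> z ^\<^sub>m d) *\<^sub>v xi d z) = ((Amat d \<alpha> z ^\<^sub>m d) *\<^sub>v xi d z) $ 0"
    unfolding zeta_def using wc
    by (subst scalar_prod_left_unit) auto
  also have "\<dots> = ff \<alpha> z d 0" using Apow_xi[OF assms, of 0 d] by simp
  finally show ?thesis .
qed


lemma exp_sum_pmf:
  assumes "finite (set_pmf p)"
  shows "measure_pmf.expectation p g = (\<Sum>a\<in>set_pmf p. g a * pmf p a)"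
  by (rule integral_measure_pmf_real) (use assms in auto)

lemma tendsto_expectation:
  fixes F :: "'b \<Rightarrow> 'a \<Rightarrow> real" and l :: "'a \<Rightarrow> real"
  assumes "finite (set_pmf p)" "\<And>x. x \<in> set_pmf p \<Longrightarrow> ((\<lambda>\<beta>. F \<beta> x) \<longlongrightarrow> l x) G"
  shows "((\<lambda>\<beta>. measure_pmf.expectation p (F \<beta>)) \<longlongrightarrow> measure_pmf.expectation p l) G"
proof -
  have "((\<lambda>\<beta>. \<Sum>a\<in>set_pmf p. F \<beta> a * pmf p a) \<longlongrightarrow> (\<Sum>a\<in>set_pmf p. l a * pmf p a)) G"
    by (auto intro!: tendsto_sum tendsto_mult assms(2))
  then show ?thesis by (simp add: exp_sum_pmf[OF assms(1)])
qed

lemma pos_expectation: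
  fixes g :: "'a \<Rightarrow> real"
  assumes "finite (set_pmf p)" "\<And>x. x \<in> set_pmf p \<Longrightarrow> g x > 0"
  shows "measure_pmf.expectation p g > 0"
proof -
  have "(\<Sum>a\<in>set_pmf p. g a * pmf p a) > 0"
    by (rule sum_pos) (use assms set_pmf_not_empty[of p] in \<open>auto simp: pmf_positive intro!: mult_pos_pos\<close>)
  then show ?thesis by (simp add: exp_sum_pmf[OF assms(1)])
qed

lemma y_lim: "((\<lambda>\<beta>::real. c / \<beta>) \<longlongrightarrow> 0) at_top"
  by (rule tendsto_divide_0[OF tendsto_const filterlim_at_top_imp_at_infinity[OF filterlim_ident]])

lemma pat:
  fixes G H F :: "real \<Rightarrow> real" and g h t z :: real
  assumes G: "(G \<longlongrightarrow> g) at_top" "g > 0" and H: "(H \<longlongrightarrow> h) at_top" "h > 0"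
    and nn: "\<And>\<beta>. 0 \<le> G \<beta>" "\<And>\<beta>. 0 \<le> H \<beta>"
    and F: "\<And>\<beta>. F \<beta> = G \<beta> * exp (-\<beta> * t) * H \<beta>" and z: "0 < z"
  shows "((\<lambda>\<beta>. F \<beta> powr (- ln z / \<beta>)) \<longlongrightarrow> z powr t) at_top"
proof -
  have ev0: "G \<beta> powr (- ln z / \<beta>) * z powr t * H \<beta> powr (- ln z / \<beta>) = F \<beta> powr (- ln z / \<beta>)"
    if elim: "0 < \<beta>" for \<beta> :: real
  proof -
    have e: "exp (-\<beta> * t) powr (- ln z / \<beta>) = z powr t"
      using elim z by (simp add: powr_def)
    have "(G \<beta> * exp (-\<beta> * t) * H \<beta>) powr (- ln z / \<beta>) = (G \<beta> * exp (-\<beta> * t)) powr (- ln z / \<beta>) * H \<beta> powr (- ln z / \<beta>)"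
      by (rule powr_mult; use nn in auto)
    also have "\<dots> = G \<beta> powr (- ln z / \<beta>) * exp (-\<beta> * t) powr (- ln z / \<beta>) * H \<beta> powr (- ln z / \<beta>)"
      by (subst powr_mult; use nn in auto)
    finally show ?thesis unfolding F e by simp
  qed
  have ev: "eventually (\<lambda>\<beta>. G \<beta> powr (- ln z / \<beta>) * z powr t * H \<beta> powr (- ln z / \<beta>) = F \<beta> powr (- ln z / \<beta>)) at_top"
    by (rule eventually_mono[OF eventually_gt_at_top[of "0::real"] ev0])
  have "((\<lambda>\<beta>. G \<beta> powr (- ln z / \<beta>) * z powr t * H \<beta> powr (- ln z / \<beta>)) \<longlongrightarrow> g powr 0 * z powr t * h powr 0) at_top"
    by (intro tendsto_mult tendsto_const tendsto_powr G H y_lim) (use G H in auto)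
  then have "((\<lambda>\<beta>. G \<beta> powr (- ln z / \<beta>) * z powr t * H \<beta> powr (- ln z / \<beta>)) \<longlongrightarrow> z powr t) at_top"
    using G H by simp
  then show ?thesis using ev by (rule Lim_transform_eventually)
qed

lemma sum2: "(\<Sum>x\<in>{-1,1::real}. (g x :: 'a :: comm_monoid_add)) = g (-1) + g 1"
  by simp

lemma expkey: "c = a \<Longrightarrow> c + e = b \<Longrightarrow> exp a + exp b = exp c * (1 + exp (e::real))"
  by (simp add: distrib_left exp_add[symmetric])

lemma fac1:
  assumes "\<tau> \<in> {-1,1}" "r h \<in> {-1,0,1}"
  shows "1 - (1 - exp (-\<beta>)) * rho r h \<tau> = (if r h = 0 then (1 + exp (-\<beta>))/2 else 1) * exp (-\<beta> * ((\<tau> * r h + \<bar>r h\<bar>)/2))"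
  using assms unfolding rho_def by (auto simp: field_simps)

lemma sumlin: "(\<Sum>h=1..d. -\<beta>*((\<tau>*r h + \<bar>r h\<bar>)/2)) = -\<beta>*((\<tau>*(\<Sum>h=1..d. r h) + (\<Sum>h=1..d. \<bar>r h\<bar>))/(2::real))"
proof -
  have "(\<Sum>h=1..d. -\<beta>*((\<tau>*r h + \<bar>r h\<bar>)/2)) = (\<Sum>h=1..d. (-\<beta>*\<tau>/2) * r h + (-\<beta>/2) * \<bar>r h\<bar>)"
    by (rule sum.cong) (auto simp: field_simps)
  also have "\<dots> = (-\<beta>*\<tau>/2) * (\<Sum>h=1..d. r h) + (-\<beta>/2) * (\<Sum>h=1..d. \<bar>r h\<bar>)"
    by (simp only: sum.distrib sum_distrib_left)
  finally show ?thesis by (simp add: field_simps)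
qed

definition G1 :: "nat \<Rightarrow> (nat \<Rightarrow> real) \<Rightarrow> real \<Rightarrow> real" where
  "G1 d r \<beta> = (\<Prod>h=1..d. if r h = 0 then (1 + exp (-\<beta>))/2 else 1)"

lemma X1_fac:
  assumes "\<And>h. r h \<in> {-1,0,1}"
  shows "X1 d \<beta> r = G1 d r \<beta> * exp (-\<beta> * ((Nn d r - \<bar>Dn d r\<bar>)/2)) * (1 + exp (-\<beta> * \<bar>Dn d r\<bar>))"
proof -
  have p: "(\<Prod>h=1..d. 1 - (1 - exp (-\<beta>)) * rho r h \<tau>) = G1 d r \<beta> * exp (-\<beta>*((\<tau>*Dn d r + Nn d r)/2))"
    if "\<tau> \<in> {-1,1}" for \<tau>
  proof -
    have "(\<Prod>h=1..d. 1 - (1 - exp (-\<beta>)) * rho r h \<tau>) =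
       (\<Prod>h=1..d. (if r h = 0 then (1 + exp (-\<beta>))/2 else 1) * exp (-\<beta> * ((\<tau> * r h + \<bar>r h\<bar>)/2)))"
      by (rule prod.cong) (use fac1 that assms in auto)
    also have "\<dots> = G1 d r \<beta> * exp (\<Sum>h=1..d. -\<beta> * ((\<tau> * r h + \<bar>r h\<bar>)/2))"
      unfolding G1_def prod.distrib exp_sum[OF finite_atLeastAtMost] ..
    finally show ?thesis unfolding sumlin Dn_def Nn_def .
  qed
  have "X1 d \<beta> r = (\<Sum>\<tau>\<in>{-1,1}. G1 d r \<beta> * exp (-\<beta>*((\<tau>*Dn d r + Nn d r)/2)))"
    unfolding X1_def by (rule sum.cong[OF refl]) (rule p)
  also have "\<dots> = G1 d r \<beta> * (exp (-\<beta>*((-1*Dn d r + Nn d r)/2)) + exp (-\<beta>*((1*Dn d r + Nn d r)/2)))"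
    by (simp only: sum_distrib_left[symmetric] sum2)
  also have "exp (-\<beta>*((-1*Dn d r + Nn d r)/2)) + exp (-\<beta>*((1*Dn d r + Nn d r)/2))
      = exp (-\<beta> * ((Nn d r - \<bar>Dn d r\<bar>)/2)) * (1 + exp (-\<beta> * \<bar>Dn d r\<bar>))"
  proof (cases "Dn d r \<ge> 0")
    case True
    then show ?thesis by (intro expkey) (auto simp: field_simps)
  next
    case False
    then show ?thesis by (subst add.commute, intro expkey) (auto simp: field_simps)
  qed
  finally show ?thesis by simp
qed

lemma half_lim: "((\<lambda>\<beta>::real. (1 + exp(-\<beta>))/2) \<longlongrightarrow> 1/2) at_top" by real_asymp

lemma G1_lim: "((G1 d r) \<longlongrightarrow> (\<Prod>h=1..d. if r h = 0 then 1/2 else 1)) at_top"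
  unfolding G1_def
proof (intro tendsto_prod)
  fix h show "((\<lambda>\<beta>. if r h = 0 then (1 + exp (-\<beta>))/2 else 1) \<longlongrightarrow> (if r h = 0 then 1/2 else (1::real))) at_top"
    using half_lim by (cases "r h = 0") auto
qed

lemma G1_nn: "0 \<le> G1 d r \<beta>"
  unfolding G1_def by (intro prod_nonneg) (auto intro: add_nonneg_nonneg)

lemma H_lim: "((\<lambda>\<beta>. 1 + exp (-\<beta> * c)) \<longlongrightarrow> (if c = 0 then 2 else 1)) at_top" if "c \<ge> (0::real)"
proof (cases "c = 0")
  case True then show ?thesis by simp
next
  case False
  then have "c > 0" using that by simp
  then have "((\<lambda>\<beta>::real. exp(-\<beta>*c)) \<longlongrightarrow> 0) at_top" by real_asymp
  then have "((\<lambda>\<beta>::real. 1 + exp(-\<beta>*c)) \<longlongrightarrow> 1 + 0) at_top" by (intro tendsto_add tendsto_const)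
  then show ?thesis using False by simp
qed

lemma X1_lim:
  assumes "\<And>h. r h \<in> {-1,0,1}" "0 < z"
  shows "((\<lambda>\<beta>. X1 d \<beta> r powr (- ln z / \<beta>)) \<longlongrightarrow> z powr ((Nn d r - \<bar>Dn d r\<bar>)/2)) at_top"
  by (rule pat[OF G1_lim _ H_lim[of "\<bar>Dn d r\<bar>"] _ G1_nn _ X1_fac[OF assms(1)] assms(2)])
     (auto intro!: prod_pos add_nonneg_nonneg)

definition G2 :: "(nat \<Rightarrow> real) \<Rightarrow> real \<Rightarrow> real" where
  "G2 r \<beta> = (if r 1 * r 2 = 0 then (1 + exp (-\<beta>))/2 else 1)"

lemma X2_fac:
  assumes "\<And>h. r h \<in> {-1,0,1}"
  shows "X2 \<beta> r = G2 r \<beta> * exp (-\<beta> * ((r 1 * r 2 + \<bar>r 1 * r 2\<bar>)/2)) * 1"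
  using assms[of 1] assms[of 2] unfolding X2_def G2_def rho_def
  by (auto simp: field_simps)

lemma X2_lim:
  assumes "\<And>h. r h \<in> {-1,0,1}" "0 < z"
  shows "((\<lambda>\<beta>. X2 \<beta> r powr (- ln z / \<beta>)) \<longlongrightarrow> z powr ((r 1 * r 2 + \<bar>r 1 * r 2\<bar>)/2)) at_top"
proof (rule pat[OF _ _ tendsto_const _ _ _ X2_fac[OF assms(1)] assms(2)])
  show "(G2 r \<longlongrightarrow> (if r 1 * r 2 = 0 then 1/2 else 1)) at_top"
    unfolding G2_def using half_lim by (cases "r 1 * r 2 = 0") auto
qed (auto simp: G2_def intro: add_nonneg_nonneg)


lemma rj0: "rjoint 0 \<alpha> = return_pmf (\<lambda>_. 0)"
  by (simp add: rjoint_def)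

lemma E_shift:
  fixes \<psi> :: "real \<Rightarrow> real \<Rightarrow> real"
  assumes "0 < \<alpha>" "\<alpha> < 1/2" "2 \<le> m"
  shows "measure_pmf.expectation (rjoint m \<alpha>) (\<lambda>r. \<psi> (r 1) (r 2)) = measure_pmf.expectation (rjoint 2 \<alpha>) (\<lambda>r. \<psi> (r 1) (r 2))"
  using assms(3)
proof (induction m rule: dec_induct)
  case base
  then show ?case by simp
next
  case (step n)
  have "Suc n \<noteq> 1" "Suc n \<noteq> 2" using step.hyps by auto
  then have "measure_pmf.expectation (rjoint (Suc n) \<alpha>) (\<lambda>r. \<psi> (r 1) (r 2)) = measure_pmf.expectation (rjoint n \<alpha>) (\<lambda>r. \<psi> (r 1) (r 2))"
    by (subst rjoint_step[OF assms(1,2)]) (simp add: algebra_simps)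
  then show ?case using step.IH by simp
qed

lemma E2_val:
  assumes "0 < \<alpha>" "\<alpha> < 1/2" "0 < z"
  shows "measure_pmf.expectation (rjoint 2 \<alpha>) (\<lambda>r. z powr ((r 1 * r 2 + \<bar>r 1 * r 2\<bar>)/2)) = 1 - 2*\<alpha>^2 + 2*\<alpha>^2*z"
proof -
  have e: "rjoint 2 \<alpha> = rjoint (Suc (Suc 0)) \<alpha>" by (simp add: numeral_2_eq_2)
  show ?thesis unfolding e
    using assms by (simp add: rjoint_step[OF assms(1,2)] rj0 power2_eq_square algebra_simps)
qed

lemma ln_nz: "0 < z \<Longrightarrow> z < 1 \<Longrightarrow> ln z < (0::real)" by simp


theorem proposition2p10:
  fixes d :: nat and z \<alpha> :: real
  assumes "d \<ge> 3" and "0 < z" and "z < 1" and "0 < \<alpha>" and "\<alpha> < 1/2"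
  shows "((\<lambda>\<beta>. let y = - ln z / \<beta> in
            (1 / (\<beta> * y)) *
              (ln (measure_pmf.expectation (rjoint d \<alpha>) (\<lambda>r. X1 d \<beta> r powr y))
               - real d / 2 * ln (measure_pmf.expectation (rjoint d \<alpha>) (\<lambda>r. X2 \<beta> r powr y))))
         \<longlongrightarrow> Fd d \<alpha> z) at_top"
proof -
  note a = assms(4,5)
  have z: "0 < z" "z < 1" using assms by auto
  have lnz: "ln z < 0" using z by simp
  define L1 where "L1 = ff \<alpha> z d 0"
  define L2 where "L2 = 1 - 2*\<alpha>^2 + 2*\<alpha>^2*z"
  have E1: "((\<lambda>\<beta>. measure_pmf.expectation (rjoint d \<alpha>) (\<lambda>r. X1 d \<beta> r powr (- ln z / \<beta>))) \<longlongrightarrow> L1) at_top"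
    unfolding L1_def ff_def
  proof (rule tendsto_expectation[OF rjoint_finite[OF a]])
    fix r assume "r \<in> set_pmf (rjoint d \<alpha>)"
    then have "\<And>h. r h \<in> {-1,0,1}" using rjoint_vals[OF a] by blast
    from X1_lim[OF this z(1), of d] show "((\<lambda>\<beta>. X1 d \<beta> r powr (- ln z / \<beta>)) \<longlongrightarrow> z powr ((Nn d r - \<bar>0 + Dn d r\<bar>) / 2)) at_top"
      by simp
  qed
  have "((\<lambda>\<beta>. measure_pmf.expectation (rjoint d \<alpha>) (\<lambda>r. X2 \<beta> r powr (- ln z / \<beta>))) \<longlongrightarrow>
     measure_pmf.expectation (rjoint d \<alpha>) (\<lambda>r. z powr ((r 1 * r 2 + \<bar>r 1 * r 2\<bar>)/2))) at_top"
  proof (rule tendsto_expectation[OF rjoint_finite[OF a]])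
    fix r assume "r \<in> set_pmf (rjoint d \<alpha>)"
    then have "\<And>h. r h \<in> {-1,0,1}" using rjoint_vals[OF a] by blast
    from X2_lim[OF this z(1)] show "((\<lambda>\<beta>. X2 \<beta> r powr (- ln z / \<beta>)) \<longlongrightarrow> z powr ((r 1 * r 2 + \<bar>r 1 * r 2\<bar>)/2)) at_top" .
  qed
  moreover have "measure_pmf.expectation (rjoint d \<alpha>) (\<lambda>r. z powr ((r 1 * r 2 + \<bar>r 1 * r 2\<bar>)/2)) = L2"
    unfolding L2_def
    using E_shift[OF a, of d "\<lambda>u v. z powr ((u * v + \<bar>u * v\<bar>)/2)"] E2_val[OF a z(1)] assms(1) by simp
  ultimately have E2: "((\<lambda>\<beta>. measure_pmf.expectation (rjoint d \<alpha>) (\<lambda>r. X2 \<beta> r powr (- ln z / \<beta>))) \<longlongrightarrow> L2) at_top"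
    by simp
  have L1p: "L1 > 0" unfolding L1_def ff_def
    by (rule pos_expectation[OF rjoint_finite[OF a]]) (use z in simp)
  have "\<alpha>^2 < 1/4"
  proof -
    have "\<alpha> * \<alpha> < (1/2) * (1/2)" using a by (intro mult_strict_mono) auto
    then show ?thesis by (simp add: power2_eq_square)
  qed
  moreover have "2*\<alpha>^2*z \<ge> 0" using z by simp
  ultimately have L2p: "L2 > 0" unfolding L2_def by linarith
  have lim: "((\<lambda>\<beta>. 1 / (- ln z) * (ln (measure_pmf.expectation (rjoint d \<alpha>) (\<lambda>r. X1 d \<beta> r powr (- ln z / \<beta>)))
       - real d / 2 * ln (measure_pmf.expectation (rjoint d \<alpha>) (\<lambda>r. X2 \<beta> r powr (- ln z / \<beta>)))))
     \<longlongrightarrow> 1 / (- ln z) * (ln L1 - real d / 2 * ln L2)) at_top"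
    by (intro tendsto_intros E1 E2) (use L1p L2p in auto)
  have val: "1 / (- ln z) * (ln L1 - real d / 2 * ln L2) = Fd d \<alpha> z"
  proof -
    have zv: "zeta d \<bullet> ((Amat d \<alpha> z ^\<^sub>m d) *\<^sub>v xi d z) = L1"
      using zeta_val[OF a z(1), of d] assms(1) by (simp add: L1_def)
    show ?thesis unfolding Fd_def zv L2_def[symmetric]
      using lnz by (simp add: field_simps)
  qed
  have ev: "eventually (\<lambda>\<beta>. 1 / (- ln z) * (ln (measure_pmf.expectation (rjoint d \<alpha>) (\<lambda>r. X1 d \<beta> r powr (- ln z / \<beta>)))
       - real d / 2 * ln (measure_pmf.expectation (rjoint d \<alpha>) (\<lambda>r. X2 \<beta> r powr (- ln z / \<beta>)))) =
     (let y = - ln z / \<beta> in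
            (1 / (\<beta> * y)) *
              (ln (measure_pmf.expectation (rjoint d \<alpha>) (\<lambda>r. X1 d \<beta> r powr y))
               - real d / 2 * ln (measure_pmf.expectation (rjoint d \<alpha>) (\<lambda>r. X2 \<beta> r powr y))))) at_top"
    by (rule eventually_mono[OF eventually_gt_at_top[of "0::real"]]) (simp add: Let_def)
  show ?thesis
    using Lim_transform_eventually[OF lim[unfolded val] ev] .
qed

end
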